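(* Let $p\in(-1,0)\cup(0,1)$, $\omega=e^{i\pi p}$, $f(x)=\frac{(x+\omega)(x-\omega^{-1})}{x^2-1}$, and $a\in\mathbb C$. The recurrent relations $$J_{N,a}(x_1,\ldots,x_{N-1},x)=2\cos\pi a\cdot J_{N-1,a}(x_1,\ldots,x_{N-1})+\sum_{i=1}^{N-1}\frac{x_i\,R_{N,a,i}(x_1,\ldots,x_{N-1})}{x+x_i},$$ where, with $X=(x_1,\ldots,x_{N-1})$ and $\hat X_i$ denoting $X$ with $x_i$ removed, $$R_{N,a,i}(X)=-i\sin\pi p\left(\prod_{j\ne i}f\!\left(\frac{x_i}{x_j}\right)-\prod_{j\ne i}f\!\left(\frac{x_j}{x_i}\right)\right)J_{N-2,a}(\hat X_i)$$ (products over $j\in\{1,\ldots,N-1\}\setminus\{i\}$), together with the initial conditions $$J_{0,a}=1,\qquad J_{1,a}(x)=2\cos\pi a,$$ define uniquely a sequence of homogeneous symmetric functions $J_{N,a}$ of $N$ variables of total degree $0$, $N=0,1,2,\ldots$; and these functions coincide with $$J_{N,a}(x_1,\ldots,x_N)=\sum_{I_+\sqcup I_-=\{1,\ldots,N\}}e^{i\pi a(\#I_--\#I_+)}\prod_{i\in I_-,\,j\in I_+}f\!\left(\frac{x_i}{x_j}\right).$$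
   Context: The sum is over ordered decompositions of $\{1,\ldots,N\}$ into two disjoint subsets $I_+,I_-$. These functions determine the breather form factors of the exponential fields in the sine/sinh-Gordon model. *)

theory Defs
  imports Complex_Main "HOL-Library.Multiset"
begin

text \<open>Indices are 0-based: a point (x_1,...,x_N) is a list of length N.\<close>

definition omega :: "real \<Rightarrow> complex" where
  "omega p = exp (\<i> * of_real (pi * p))"

definition ff :: "real \<Rightarrow> complex \<Rightarrow> complex" where
  "ff p x = (x + omega p) * (x - inverse (omega p)) / (x\<^sup>2 - 1)"

text \<open>Generic points: nonzero coordinates, x_i \<noteq> \<plusminus>x_j for i \<noteq> j
  (the points where all f(x_i/x_j) and all 1/(x+x_i) are defined).\<close>
definition generic :: "complex list \<Rightarrow> bool" where
  "generic xs \<longleftrightarrow> (\<forall>i<length xs. xs ! i \<noteq> 0 \<and>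
      (\<forall>j<length xs. i \<noteq> j \<longrightarrow> xs ! i \<noteq> xs ! j \<and> xs ! i \<noteq> - (xs ! j)))"

definition remove_at :: "nat \<Rightarrow> 'a list \<Rightarrow> 'a list" where
  "remove_at i xs = take i xs @ drop (Suc i) xs"

definition RR :: "real \<Rightarrow> (complex list \<Rightarrow> complex) \<Rightarrow> complex list \<Rightarrow> nat \<Rightarrow> complex" where
  "RR p J xs i = - \<i> * of_real (sin (pi * p)) *
     ((\<Prod>j\<in>{0..<length xs} - {i}. ff p (xs ! i / xs ! j))
      - (\<Prod>j\<in>{0..<length xs} - {i}. ff p (xs ! j / xs ! i)))
     * J (remove_at i xs)"

text \<open>The recurrence and initial conditions for a sequence J (J restricted to lists
  of length N is J_{N,a}).\<close>
definition satisfies_rec :: "real \<Rightarrow> complex \<Rightarrow> (complex list \<Rightarrow> complex) \<Rightarrow> bool" where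
  "satisfies_rec p a J \<longleftrightarrow>
     J [] = 1 \<and>
     (\<forall>x. J [x] = 2 * cos (of_real pi * a)) \<and>
     (\<forall>xs x. length xs \<ge> 1 \<longrightarrow> generic (xs @ [x]) \<longrightarrow>
        J (xs @ [x]) = 2 * cos (of_real pi * a) * J xs
          + (\<Sum>i<length xs. xs ! i * RR p J xs i / (x + xs ! i)))"

text \<open>Explicit formula: I_- = Im, I_+ = complement of Im in {0..<N}.\<close>
definition Jsum :: "real \<Rightarrow> complex \<Rightarrow> complex list \<Rightarrow> complex" where
  "Jsum p a xs = (\<Sum>Im\<in>Pow {0..<length xs}.
      exp (\<i> * of_real pi * a * (of_nat (card Im) - of_nat (card ({0..<length xs} - Im))))
      * (\<Prod>i\<in>Im. \<Prod>j\<in>{0..<length xs} - Im. ff p (xs ! i / xs ! j)))"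

end

theory Submission
  imports Defs "HOL-Complex_Analysis.Complex_Analysis" "HOL-Combinatorics.Permutations"
begin



lemma eventually_avoid_finite_at:
  fixes F :: "complex set"
  assumes "finite F"
  shows "eventually (\<lambda>z. z \<notin> F) (at s)"
proof -
  have "open (- (F - {s}))" using assms by (intro open_Compl finite_imp_closed) auto
  then have "eventually (\<lambda>z. z \<in> - (F - {s})) (nhds s)"
    by (intro eventually_nhds_in_open) auto
  then have "eventually (\<lambda>z. z \<in> - (F - {s})) (at s)"
    unfolding eventually_at_filter by (rule eventually_mono) auto
  moreover have "eventually (\<lambda>z. z \<noteq> s) (at s)" by (simp add: eventually_at_filter)
  ultimately show ?thesis by eventually_elim auto
qed

lemma eventually_avoid_finite_inf:
  fixes F :: "complex set"
  assumes "finite F"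
  shows "eventually (\<lambda>z. z \<notin> F) at_infinity"
proof -
  have "bounded F" using assms by (rule finite_imp_bounded)
  then obtain B where B: "\<forall>x\<in>F. norm x \<le> B" unfolding bounded_iff by blast
  show ?thesis unfolding eventually_at_infinity
  proof (intro exI[of _ "B+1"] allI impI)
    fix x :: complex assume x: "B + 1 \<le> norm x"
    show "x \<notin> F"
    proof
      assume "x \<in> F" then have "norm x \<le> B" using B by blast
      with x show False by simp
    qed
  qed
qed

lemma remove_sings_zero:
  fixes G :: "complex \<Rightarrow> complex"
  assumes "finite T" "G holomorphic_on (- T)"
    "\<And>t. t \<in> T \<Longrightarrow> ((\<lambda>z. (z - t) * G z) \<longlongrightarrow> 0) (at t)"
    "(G \<longlongrightarrow> 0) at_infinity" "z \<notin> T"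
  shows "G z = 0"
  using assms
proof (induction T arbitrary: G rule: finite_induct)
  case empty
  then show ?case using Liouville_weak_0[of G] by simp
next
  case (insert t T)
  have op: "open (- T)" using insert.hyps(1) by (simp add: finite_imp_closed open_Compl)
  have ti: "t \<in> interior (-T)" using insert.hyps(2) op by (simp add: interior_open)
  have "- insert t T = -T - {t}" by blast
  then have hol: "G holomorphic_on (-T - {t})" using insert.prems(1) by simp
  obtain g where g: "g holomorphic_on (-T)" "\<And>z. z \<in> -T - {t} \<Longrightarrow> g z = G z"
    using holomorphic_on_extend_lim[OF hol ti] insert.prems(2) by blast
  have fin: "finite (insert t T)" using insert.hyps(1) by simp
  have ev: "eventually (\<lambda>z. G z = g z) F" if "eventually (\<lambda>z. z \<notin> insert t T) F" for F
    using that by (rule eventually_mono) (use g(2) in force)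
  have "g z = 0"
  proof (rule insert.IH[OF g(1)])
    fix s assume "s \<in> T"
    have "((\<lambda>z. (z - s) * G z) \<longlongrightarrow> 0) (at s)" using insert.prems(2) \<open>s \<in> T\<close> by blast
    moreover have "eventually (\<lambda>z. (z - s) * G z = (z - s) * g z) (at s)"
      using ev[OF eventually_avoid_finite_at[OF fin]] by (rule eventually_mono) simp
    ultimately show "((\<lambda>z. (z - s) * g z) \<longlongrightarrow> 0) (at s)"
      by (rule Lim_transform_eventually)
  next
    show "(g \<longlongrightarrow> 0) at_infinity"
      using insert.prems(3) ev[OF eventually_avoid_finite_inf[OF fin]] by (rule Lim_transform_eventually)
  next
    show "z \<notin> T" using insert.prems by blast
  qed
  then show ?case using g(2)[of z] insert.prems by auto
qed

definition wt :: "complex \<Rightarrow> nat \<Rightarrow> nat \<Rightarrow> complex" where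
  "wt a m k = exp (\<i> * of_real pi * a * (of_nat m - of_nat k))"

definition PMg :: "(complex \<Rightarrow> complex \<Rightarrow> complex) \<Rightarrow> (nat \<Rightarrow> complex) \<Rightarrow> nat set \<Rightarrow> nat set \<Rightarrow> complex" where
  "PMg \<phi> x I M = (\<Prod>i\<in>M. \<Prod>j\<in>I - M. \<phi> (x i) (x j))"

definition JSg :: "(complex \<Rightarrow> complex \<Rightarrow> complex) \<Rightarrow> complex \<Rightarrow> (nat \<Rightarrow> complex) \<Rightarrow> nat set \<Rightarrow> complex" where
  "JSg \<phi> a x I = (\<Sum>M\<in>Pow I. wt a (card M) (card (I - M)) * PMg \<phi> x I M)"

definition LL :: "(complex \<Rightarrow> complex \<Rightarrow> complex) \<Rightarrow> complex \<Rightarrow> (nat \<Rightarrow> complex) \<Rightarrow> nat set \<Rightarrow> complex \<Rightarrow> complex" where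
  "LL \<phi> a x I z = (\<Sum>M\<in>Pow I. wt a (Suc (card M)) (card (I - M)) * PMg \<phi> x I M * (\<Prod>k\<in>I - M. \<phi> z (x k)))
     + (\<Sum>M\<in>Pow I. wt a (card M) (Suc (card (I - M))) * PMg \<phi> x I M * (\<Prod>i\<in>M. \<phi> (x i) z))"

lemma Jsum_JSg: "Jsum p a xs = JSg (\<lambda>u v. ff p (u / v)) a (nth xs) {0..<length xs}"
  by (simp add: Jsum_def JSg_def wt_def PMg_def)

lemma wt_Suc1: "wt a (Suc m) k = exp (\<i> * of_real pi * a) * wt a m k"
  unfolding wt_def exp_add[symmetric] by (rule arg_cong[where f=exp]) (simp add: algebra_simps)

lemma wt_Suc2: "wt a m (Suc k) = exp (-(\<i> * of_real pi * a)) * wt a m k"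
  unfolding wt_def exp_add[symmetric] by (rule arg_cong[where f=exp]) (simp add: algebra_simps)

lemma wt_SucSuc: "wt a (Suc m) (Suc k) = wt a m k"
  unfolding wt_def by (rule arg_cong[where f=exp]) (simp add: algebra_simps)

lemma JSg_cong: "(\<And>i. i \<in> I \<Longrightarrow> x i = y i) \<Longrightarrow> JSg \<phi> a x I = JSg \<phi> a y I"
  unfolding JSg_def PMg_def by (intro sum.cong refl arg_cong2[where f="(*)"] prod.cong) auto

lemma JSg_cong_phi: "(\<And>i j. i \<in> I \<Longrightarrow> j \<in> I \<Longrightarrow> \<phi> (x i) (x j) = \<psi> (x i) (x j)) \<Longrightarrow> JSg \<phi> a x I = JSg \<psi> a x I"
  unfolding JSg_def PMg_def by (intro sum.cong refl arg_cong2[where f="(*)"] prod.cong) auto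

lemma LL_cong: "(\<And>i. i \<in> I \<Longrightarrow> x i = y i) \<Longrightarrow> LL \<phi> a x I z = LL \<phi> a y I z"
  unfolding LL_def PMg_def by (intro arg_cong2[where f="(+)"] sum.cong refl arg_cong2[where f="(*)"] prod.cong) auto

lemma JSg_reindex:
  assumes "inj_on h I"
  shows "JSg \<phi> a (x \<circ> h) I = JSg \<phi> a x (h ` I)"
proof -
  have P: "Pow (h ` I) = (image h) ` Pow I"
  proof (rule set_eqI)
    fix N
    show "N \<in> Pow (h ` I) \<longleftrightarrow> N \<in> image h ` Pow I"
    proof
      assume "N \<in> Pow (h ` I)"
      then have "N \<subseteq> h ` I" by simp
      then obtain M where "M \<subseteq> I" "N = h ` M" by (rule subset_imageE)
      then show "N \<in> image h ` Pow I" by blast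
    qed blast
  qed
  have inj: "inj_on (image h) (Pow I)" using assms by (rule inj_on_image_Pow)
  have "JSg \<phi> a x (h ` I) = (\<Sum>N\<in>image h ` Pow I. wt a (card N) (card (h ` I - N)) * PMg \<phi> x (h ` I) N)"
    by (simp only: JSg_def P)
  also have "\<dots> = (\<Sum>M\<in>Pow I. wt a (card (h ` M)) (card (h ` I - h ` M)) * PMg \<phi> x (h ` I) (h ` M))"
    by (simp only: sum.reindex[OF inj] comp_def)
  also have "\<dots> = JSg \<phi> a (x \<circ> h) I"
    unfolding JSg_def
  proof (intro sum.cong refl)
    fix M assume M: "M \<in> Pow I"
    have iM: "inj_on h M" using M assms by (auto intro: inj_on_subset)
    have iD: "inj_on h (I - M)" using assms by (auto intro: inj_on_subset)
    have D: "h ` I - h ` M = h ` (I - M)" using M assms by (auto simp: inj_on_image_set_diff)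
    have "PMg \<phi> x (h ` I) (h ` M) = PMg \<phi> (x \<circ> h) I M"
      unfolding PMg_def D prod.reindex[OF iM] prod.reindex[OF iD] by simp
    moreover have "card (h ` M) = card M" "card (h ` (I - M)) = card (I - M)"
      using iM iD by (simp_all add: card_image)
    ultimately show "wt a (card (h ` M)) (card (h ` I - h ` M)) * PMg \<phi> x (h ` I) (h ` M) =
      wt a (card M) (card (I - M)) * PMg \<phi> (x \<circ> h) I M"
      by (simp only: D)
  qed
  finally show ?thesis by simp
qed

lemma sum_Pow_insert:
  assumes "finite I" "j \<notin> I"
  shows "(\<Sum>M\<in>Pow (insert j I). g M) = (\<Sum>M\<in>Pow I. g M) + (\<Sum>M\<in>Pow I. g (insert j M))"
proof -
  have inj: "inj_on (insert j) (Pow I)"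
  proof (rule inj_onI)
    fix A B assume "A \<in> Pow I" "B \<in> Pow I" "insert j A = insert j B"
    moreover have "j \<notin> A" "j \<notin> B" using assms(2) \<open>A \<in> Pow I\<close> \<open>B \<in> Pow I\<close> by auto
    ultimately show "A = B" by (simp add: insert_ident)
  qed
  have disj: "Pow I \<inter> insert j ` Pow I = {}" using assms(2) by auto
  have fin: "finite (Pow I)" "finite (insert j ` Pow I)" using assms(1) by simp_all
  have "(\<Sum>M\<in>Pow (insert j I). g M) = (\<Sum>M\<in>Pow I \<union> insert j ` Pow I. g M)"
    by (simp only: Pow_insert)
  also have "\<dots> = (\<Sum>M\<in>Pow I. g M) + (\<Sum>M\<in>insert j ` Pow I. g M)"
    by (rule sum.union_disjoint[OF fin disj])
  also have "(\<Sum>M\<in>insert j ` Pow I. g M) = (\<Sum>M\<in>Pow I. g (insert j M))"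
    by (simp only: sum.reindex[OF inj] comp_def)
  finally show ?thesis .
qed

lemma PM_ins1:
  assumes "finite I" "j \<notin> I" "M \<subseteq> I"
  shows "PMg \<phi> x (insert j I) M = PMg \<phi> x I M * (\<Prod>i\<in>M. \<phi> (x i) (x j))"
proof -
  have e: "insert j I - M = insert j (I - M)" using assms by auto
  have "PMg \<phi> x (insert j I) M = (\<Prod>i\<in>M. \<phi> (x i) (x j) * (\<Prod>k\<in>I - M. \<phi> (x i) (x k)))"
    unfolding PMg_def e by (intro prod.cong refl) (use assms in auto)
  also have "\<dots> = (\<Prod>i\<in>M. \<phi> (x i) (x j)) * PMg \<phi> x I M"
    unfolding PMg_def by (rule prod.distrib)
  finally show ?thesis by (simp only: mult.commute)
qed

lemma PM_ins2:
  assumes "finite I" "j \<notin> I" "M \<subseteq> I"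
  shows "PMg \<phi> x (insert j I) (insert j M) = PMg \<phi> x I M * (\<Prod>k\<in>I - M. \<phi> (x j) (x k))"
proof -
  have e: "insert j I - insert j M = I - M" using assms by auto
  have "finite M" using assms finite_subset by blast
  moreover have "j \<notin> M" using assms by auto
  ultimately show ?thesis unfolding PMg_def e by (simp add: mult.commute)
qed

lemma JS_insert:
  assumes "finite I" "j \<notin> I"
  shows "JSg \<phi> a x (insert j I) = LL \<phi> a x I (x j)"
proof -
  have "JSg \<phi> a x (insert j I) = (\<Sum>M\<in>Pow I. wt a (card M) (card (insert j I - M)) * PMg \<phi> x (insert j I) M)
     + (\<Sum>M\<in>Pow I. wt a (card (insert j M)) (card (insert j I - insert j M)) * PMg \<phi> x (insert j I) (insert j M))"
    unfolding JSg_def by (rule sum_Pow_insert[OF assms])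
  also have "\<dots> = LL \<phi> a x I (x j)"
    unfolding LL_def
  proof (rule trans[OF add.commute], intro arg_cong2[where f="(+)"] sum.cong refl)
    fix M assume M: "M \<in> Pow I"
    have fM: "finite M" "j \<notin> M" using M assms finite_subset by auto
    have e: "insert j I - insert j M = I - M" using M assms by auto
    show "wt a (card (insert j M)) (card (insert j I - insert j M)) * PMg \<phi> x (insert j I) (insert j M) =
      wt a (Suc (card M)) (card (I - M)) * PMg \<phi> x I M * (\<Prod>k\<in>I - M. \<phi> (x j) (x k))"
      using M assms fM by (simp add: e PM_ins2 mult.assoc)
  next
    fix M assume M: "M \<in> Pow I"
    have e: "insert j I - M = insert j (I - M)" using M assms by auto
    have "card (insert j I - M) = Suc (card (I - M))" unfolding e using assms by simp
    then show "wt a (card M) (card (insert j I - M)) * PMg \<phi> x (insert j I) M =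
      wt a (card M) (Suc (card (I - M))) * PMg \<phi> x I M * (\<Prod>i\<in>M. \<phi> (x i) (x j))"
      using M assms by (simp add: PM_ins1 mult.assoc)
  qed
  finally show ?thesis .
qed




definition fr :: "real \<Rightarrow> complex \<Rightarrow> complex \<Rightarrow> complex" where
  "fr p u v = (u + omega p * v) * (u - inverse (omega p) * v) / (u^2 - v^2)"

definition rho :: "real \<Rightarrow> complex" where
  "rho p = (omega p - inverse (omega p)) / 2"

lemma omega_nz: "omega p \<noteq> 0" by (simp add: omega_def)

lemma rho_sin: "rho p = \<i> * of_real (sin (pi * p))"
proof -
  have "omega p = cis (pi * p)" by (simp add: omega_def cis_conv_exp)
  then show ?thesis by (simp add: rho_def complex_eq_iff cis.sel)
qed

lemma div_cancel: "(c::complex) \<noteq> 0 \<Longrightarrow> (A / c) / (B / c) = A / B"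
  by (cases "B = 0") (simp_all add: field_simps)

lemma ff_fr:
  assumes "v \<noteq> 0"
  shows "ff p (u / v) = fr p u v"
proof -
  have v2: "v^2 \<noteq> 0" using assms by simp
  have N: "(u / v + omega p) * (u / v - inverse (omega p)) = (u + omega p * v) * (u - inverse (omega p) * v) / v^2"
    using assms by (simp add: field_simps power2_eq_square)
  have D: "(u / v)^2 - 1 = (u^2 - v^2) / v^2"
    using assms by (simp add: field_simps power2_eq_square)
  show ?thesis unfolding ff_def fr_def N D div_cancel[OF v2] ..
qed

lemma fr_neg1: "fr p (-c) d = fr p d c"
proof -
  have N: "(-c + omega p * d) * (-c - inverse (omega p) * d) = - ((d + omega p * c) * (d - inverse (omega p) * c))"
    using omega_nz[of p] by (simp add: field_simps; simp add: algebra_simps)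
  have D: "(-c)^2 - d^2 = - (d^2 - c^2)" by simp
  show ?thesis unfolding fr_def N D minus_divide_divide ..
qed

lemma fr_neg2: "fr p d (-c) = fr p c d"
proof -
  have N: "(d + omega p * - c) * (d - inverse (omega p) * - c) = - ((c + omega p * d) * (c - inverse (omega p) * d))"
    using omega_nz[of p] by (simp add: field_simps; simp add: algebra_simps)
  have D: "d^2 - (-c)^2 = - (c^2 - d^2)" by simp
  show ?thesis unfolding fr_def N D minus_divide_divide ..
qed

lemma sq_ne: "(t::complex) \<noteq> c \<Longrightarrow> t \<noteq> -c \<Longrightarrow> t^2 - c^2 \<noteq> 0"
  by (simp add: power2_eq_iff)

lemma hol_fr1 [holomorphic_intros]:
  "(\<And>z. z \<in> S \<Longrightarrow> z \<noteq> c \<and> z \<noteq> -c) \<Longrightarrow> (\<lambda>z. fr p z c) holomorphic_on S"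
  unfolding fr_def by (intro holomorphic_intros) (auto simp: power2_eq_iff equation_minus_iff)

lemma hol_fr2 [holomorphic_intros]:
  "(\<And>z. z \<in> S \<Longrightarrow> z \<noteq> c \<and> z \<noteq> -c) \<Longrightarrow> (\<lambda>z. fr p c z) holomorphic_on S"
  unfolding fr_def by (intro holomorphic_intros) (auto simp: power2_eq_iff equation_minus_iff)

lemma cont_fr1: "t \<noteq> c \<Longrightarrow> t \<noteq> -c \<Longrightarrow> ((\<lambda>z. fr p z c) \<longlongrightarrow> fr p t c) (at t)"
  unfolding fr_def by (intro tendsto_intros) (auto simp: power2_eq_iff equation_minus_iff)

lemma cont_fr2: "t \<noteq> c \<Longrightarrow> t \<noteq> -c \<Longrightarrow> ((\<lambda>z. fr p c z) \<longlongrightarrow> fr p c t) (at t)"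
  unfolding fr_def by (intro tendsto_intros) (auto simp: power2_eq_iff equation_minus_iff)

lemma pole_gen:
  fixes t :: complex
  assumes "((\<lambda>z. q z) \<longlongrightarrow> q t) (at t)" "q t = \<alpha>"
    "eventually (\<lambda>z. q z = (z - t) * g z) (at t)"
  shows "((\<lambda>z. (z - t) * g z) \<longlongrightarrow> \<alpha>) (at t)"
  using Lim_transform_eventually[OF assms(1) assms(3)] assms(2) by simp

lemma canc: "(a::complex) \<noteq> 0 \<Longrightarrow> a * (A / (a * B)) = A / B"
  by (metis nonzero_mult_divide_mult_cancel_left times_divide_eq_right)

lemma pole1:
  assumes c: "c \<noteq> 0"
  shows "((\<lambda>z. (z - c) * fr p z c) \<longlongrightarrow> rho p * c) (at c)"
proof (rule pole_gen[where q="\<lambda>z. (z + omega p * c) * (z - inverse (omega p) * c) / (z + c)"])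
  show "((\<lambda>z. (z + omega p * c) * (z - inverse (omega p) * c) / (z + c)) \<longlongrightarrow>
     (c + omega p * c) * (c - inverse (omega p) * c) / (c + c)) (at c)"
    using c by (intro tendsto_intros) auto
  show "(c + omega p * c) * (c - inverse (omega p) * c) / (c + c) = rho p * c"
    using c omega_nz[of p] by (simp add: rho_def field_simps; simp add: algebra_simps power2_eq_square)
  have "eventually (\<lambda>z. z \<notin> {c, -c}) (at c)" by (rule eventually_avoid_finite_at) simp
  then show "eventually (\<lambda>z. (z + omega p * c) * (z - inverse (omega p) * c) / (z + c) = (z - c) * fr p z c) (at c)"
  proof (rule eventually_mono)
    fix z assume "z \<notin> {c, -c}"
    then have z1: "z - c \<noteq> 0" and z2: "z + c \<noteq> 0" by (auto simp: eq_neg_iff_add_eq_0)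
    have "z^2 - c^2 = (z - c) * (z + c)" by (simp add: algebra_simps power2_eq_square)
    then have F: "fr p z c = (z + omega p * c) * (z - inverse (omega p) * c) / ((z - c) * (z + c))"
      unfolding fr_def by simp
    show "(z + omega p * c) * (z - inverse (omega p) * c) / (z + c) = (z - c) * fr p z c"
      unfolding F canc[OF z1] ..
  qed
qed

lemma pole2:
  assumes c: "c \<noteq> 0"
  shows "((\<lambda>z. (z - c) * fr p c z) \<longlongrightarrow> - (rho p * c)) (at c)"
proof (rule pole_gen[where q="\<lambda>z. - ((c + omega p * z) * (c - inverse (omega p) * z) / (c + z))"])
  show "((\<lambda>z. - ((c + omega p * z) * (c - inverse (omega p) * z) / (c + z))) \<longlongrightarrow>
     - ((c + omega p * c) * (c - inverse (omega p) * c) / (c + c))) (at c)"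
    using c by (intro tendsto_intros) auto
  show "- ((c + omega p * c) * (c - inverse (omega p) * c) / (c + c)) = - (rho p * c)"
    using c omega_nz[of p] by (simp add: rho_def field_simps; simp add: algebra_simps power2_eq_square)
  have "eventually (\<lambda>z. z \<notin> {c, -c}) (at c)" by (rule eventually_avoid_finite_at) simp
  then show "eventually (\<lambda>z. - ((c + omega p * z) * (c - inverse (omega p) * z) / (c + z)) = (z - c) * fr p c z) (at c)"
  proof (rule eventually_mono)
    fix z assume "z \<notin> {c, -c}"
    then have z1: "c - z \<noteq> 0" and z2: "c + z \<noteq> 0" by (auto simp: eq_neg_iff_add_eq_0 add.commute)
    have "c^2 - z^2 = (z - c) * (- (c + z))" by (simp add: algebra_simps power2_eq_square)
    then have F: "fr p c z = (c + omega p * z) * (c - inverse (omega p) * z) / ((z - c) * (- (c + z)))"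
      unfolding fr_def by simp
    have z3: "z - c \<noteq> 0" using z1 by auto
    show "- ((c + omega p * z) * (c - inverse (omega p) * z) / (c + z)) = (z - c) * fr p c z"
      unfolding F canc[OF z3] minus_divide_right ..
  qed
qed

lemma pole3:
  assumes c: "c \<noteq> 0"
  shows "((\<lambda>z. (z - - c) * fr p z c) \<longlongrightarrow> rho p * c) (at (-c))"
proof (rule pole_gen[where q="\<lambda>z. (z + omega p * c) * (z - inverse (omega p) * c) / (z - c)"])
  show "((\<lambda>z. (z + omega p * c) * (z - inverse (omega p) * c) / (z - c)) \<longlongrightarrow>
     (-c + omega p * c) * (-c - inverse (omega p) * c) / (-c - c)) (at (-c))"
    using c by (intro tendsto_intros) auto
  show "(-c + omega p * c) * (-c - inverse (omega p) * c) / (-c - c) = rho p * c"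
    using c omega_nz[of p] by (simp add: rho_def field_simps; simp add: algebra_simps power2_eq_square)
  have "eventually (\<lambda>z. z \<notin> {c, -c}) (at (-c))" by (rule eventually_avoid_finite_at) simp
  then show "eventually (\<lambda>z. (z + omega p * c) * (z - inverse (omega p) * c) / (z - c) = (z - - c) * fr p z c) (at (-c))"
  proof (rule eventually_mono)
    fix z assume "z \<notin> {c, -c}"
    then have z1: "z - c \<noteq> 0" and z2: "z + c \<noteq> 0" by (auto simp: eq_neg_iff_add_eq_0)
    have "z^2 - c^2 = (z - c) * (z + c)" by (simp add: algebra_simps power2_eq_square)
    then have F: "fr p z c = (z + omega p * c) * (z - inverse (omega p) * c) / ((z + c) * (z - c))"
      unfolding fr_def by (simp add: mult.commute)
    show "(z + omega p * c) * (z - inverse (omega p) * c) / (z - c) = (z - - c) * fr p z c"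
      unfolding F diff_minus_eq_add canc[OF z2] ..
  qed
qed

lemma pole4:
  assumes c: "c \<noteq> 0"
  shows "((\<lambda>z. (z - - c) * fr p c z) \<longlongrightarrow> - (rho p * c)) (at (-c))"
proof (rule pole_gen[where q="\<lambda>z. (c + omega p * z) * (c - inverse (omega p) * z) / (c - z)"])
  show "((\<lambda>z. (c + omega p * z) * (c - inverse (omega p) * z) / (c - z)) \<longlongrightarrow>
     (c + omega p * -c) * (c - inverse (omega p) * -c) / (c - -c)) (at (-c))"
    using c by (intro tendsto_intros) auto
  show "(c + omega p * -c) * (c - inverse (omega p) * -c) / (c - -c) = - (rho p * c)"
    using c omega_nz[of p] by (simp add: rho_def field_simps; simp add: algebra_simps power2_eq_square)
  have "eventually (\<lambda>z. z \<notin> {c, -c}) (at (-c))" by (rule eventually_avoid_finite_at) simp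
  then show "eventually (\<lambda>z. (c + omega p * z) * (c - inverse (omega p) * z) / (c - z) = (z - - c) * fr p c z) (at (-c))"
  proof (rule eventually_mono)
    fix z assume "z \<notin> {c, -c}"
    then have z1: "c - z \<noteq> 0" and z2: "c + z \<noteq> 0" by (auto simp: eq_neg_iff_add_eq_0 add.commute)
    have "c^2 - z^2 = (z + c) * (c - z)" by (simp add: algebra_simps power2_eq_square)
    then have F: "fr p c z = (c + omega p * z) * (c - inverse (omega p) * z) / ((z + c) * (c - z))"
      unfolding fr_def by simp
    have z3: "z + c \<noteq> 0" using z2 by (simp add: add.commute)
    show "(c + omega p * z) * (c - inverse (omega p) * z) / (c - z) = (z - - c) * fr p c z"
      unfolding F diff_minus_eq_add canc[OF z3] ..
  qed
qed

lemma inf_fr1: "((\<lambda>z. fr p z c) \<longlongrightarrow> 1) at_infinity"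
proof -
  define q where "q u = (1 + omega p * c * u) * (1 - inverse (omega p) * c * u) / (1 - c^2 * u^2)" for u
  have "isCont q 0" unfolding q_def by (intro continuous_intros) auto
  then have "((\<lambda>z. q (inverse z)) \<longlongrightarrow> q 0) at_infinity"
    by (rule isCont_tendsto_compose[OF _ tendsto_inverse_0])
  moreover have "q 0 = 1" by (simp add: q_def)
  moreover have "eventually (\<lambda>z. q (inverse z) = fr p z c) at_infinity"
    unfolding eventually_at_infinity
  proof (intro exI[of _ 1] allI impI)
    fix z :: complex assume "1 \<le> norm z"
    then have z: "z \<noteq> 0" by auto
    then have z2: "z^2 \<noteq> 0" by simp
    have N: "(z + omega p * c) * (z - inverse (omega p) * c) / z^2 = (1 + omega p * c * inverse z) * (1 - inverse (omega p) * c * inverse z)"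
      using z by (simp add: field_simps power2_eq_square)
    have D: "(z^2 - c^2) / z^2 = 1 - c^2 * (inverse z)^2"
      using z by (simp add: field_simps power2_eq_square)
    have E: "fr p z c = ((z + omega p * c) * (z - inverse (omega p) * c) / z^2) / ((z^2 - c^2) / z^2)"
      unfolding fr_def div_cancel[OF z2] ..
    show "q (inverse z) = fr p z c"
      unfolding E N D q_def ..
  qed
  ultimately show ?thesis using Lim_transform_eventually by fastforce
qed

lemma inf_fr2: "((\<lambda>z. fr p c z) \<longlongrightarrow> 1) at_infinity"
proof -
  define q where "q u = (c * u + omega p) * (c * u - inverse (omega p)) / (c^2 * u^2 - 1)" for u
  have "isCont q 0" unfolding q_def by (intro continuous_intros) auto
  then have "((\<lambda>z. q (inverse z)) \<longlongrightarrow> q 0) at_infinity"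
    by (rule isCont_tendsto_compose[OF _ tendsto_inverse_0])
  moreover have "q 0 = 1" using omega_nz[of p] by (simp add: q_def)
  moreover have "eventually (\<lambda>z. q (inverse z) = fr p c z) at_infinity"
    unfolding eventually_at_infinity
  proof (intro exI[of _ 1] allI impI)
    fix z :: complex assume "1 \<le> norm z"
    then have z: "z \<noteq> 0" by auto
    then have z2: "z^2 \<noteq> 0" by simp
    have N: "(c + omega p * z) * (c - inverse (omega p) * z) / z^2 = (c * inverse z + omega p) * (c * inverse z - inverse (omega p))"
      using z by (simp add: field_simps power2_eq_square)
    have D: "(c^2 - z^2) / z^2 = c^2 * (inverse z)^2 - 1"
      using z by (simp add: field_simps power2_eq_square)
    have E: "fr p c z = ((c + omega p * z) * (c - inverse (omega p) * z) / z^2) / ((c^2 - z^2) / z^2)"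
      unfolding fr_def div_cancel[OF z2] ..
    show "q (inverse z) = fr p c z"
      unfolding E N D q_def ..
  qed
  ultimately show ?thesis using Lim_transform_eventually by fastforce
qed

lemma lim_prod_gen:
  fixes f :: "nat \<Rightarrow> complex \<Rightarrow> complex"
  assumes "finite S" "\<And>k. k \<in> S - {j} \<Longrightarrow> (f k \<longlongrightarrow> f k t) (at t)"
    "((\<lambda>z. (z - t) * f j z) \<longlongrightarrow> \<alpha>) (at t)"
  shows "((\<lambda>z. (z - t) * (\<Prod>k\<in>S. f k z)) \<longlongrightarrow> (if j \<in> S then \<alpha> * (\<Prod>k\<in>S-{j}. f k t) else 0)) (at t)"
proof (cases "j \<in> S")
  case True
  have e: "(\<lambda>z. (z - t) * (\<Prod>k\<in>S. f k z)) = (\<lambda>z. ((z - t) * f j z) * (\<Prod>k\<in>S-{j}. f k z))"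
    using assms(1) True by (simp add: prod.remove mult.assoc)
  have "((\<lambda>z. ((z - t) * f j z) * (\<Prod>k\<in>S-{j}. f k z)) \<longlongrightarrow> \<alpha> * (\<Prod>k\<in>S-{j}. f k t)) (at t)"
    by (intro tendsto_mult assms(3) tendsto_prod assms(2))
  then show ?thesis using True e by simp
next
  case False
  have "((\<lambda>z. (z - t) * (\<Prod>k\<in>S. f k z)) \<longlongrightarrow> (t - t) * (\<Prod>k\<in>S. f k t)) (at t)"
    using False assms(2) by (intro tendsto_mult tendsto_diff tendsto_ident_at tendsto_const tendsto_prod) auto
  then show ?thesis using False by simp
qed




definition sg :: "real \<Rightarrow> complex" where "sg p = - \<i> * of_real (sin (pi * p))"

lemma rho_sg: "rho p = - sg p" by (simp add: rho_sin sg_def)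

definition EE :: "complex \<Rightarrow> complex" where
  "EE a = exp (\<i> * of_real pi * a) + exp (-(\<i> * of_real pi * a))"

definition DD :: "real \<Rightarrow> complex \<Rightarrow> (nat \<Rightarrow> complex) \<Rightarrow> nat set \<Rightarrow> nat \<Rightarrow> complex" where
  "DD p a x I i = x i * (sg p * ((\<Prod>j\<in>I-{i}. fr p (x i) (x j)) - (\<Prod>j\<in>I-{i}. fr p (x j) (x i))) * JSg (fr p) a x (I - {i}))"

lemma resid_plus:
  assumes fin: "finite I" and j: "j \<in> I"
  shows "(\<Sum>M\<in>Pow I. wt a (Suc (card M)) (card (I - M)) * PMg (fr p) x I M * (if j \<in> I - M then r * (\<Prod>k\<in>I - M - {j}. fr p (x j) (x k)) else 0))
    + (\<Sum>M\<in>Pow I. wt a (card M) (Suc (card (I - M))) * PMg (fr p) x I M * (if j \<in> M then - r * (\<Prod>i\<in>M - {j}. fr p (x i) (x j)) else 0)) = 0"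
proof -
  define I' where "I' = I - {j}"
  have I: "I = insert j I'" "j \<notin> I'" "finite I'" using j fin by (auto simp: I'_def)
  define F1 where "F1 M = wt a (Suc (card M)) (card (I - M)) * PMg (fr p) x I M * (if j \<in> I - M then r * (\<Prod>k\<in>I - M - {j}. fr p (x j) (x k)) else 0)" for M
  define F2 where "F2 M = wt a (card M) (Suc (card (I - M))) * PMg (fr p) x I M * (if j \<in> M then - r * (\<Prod>i\<in>M - {j}. fr p (x i) (x j)) else 0)" for M
  have S1: "(\<Sum>M\<in>Pow I. F1 M) = (\<Sum>M\<in>Pow I'. F1 M) + (\<Sum>M\<in>Pow I'. F1 (insert j M))"
    unfolding I(1) by (rule sum_Pow_insert[OF I(3) I(2)])
  have S2: "(\<Sum>M\<in>Pow I. F2 M) = (\<Sum>M\<in>Pow I'. F2 M) + (\<Sum>M\<in>Pow I'. F2 (insert j M))"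
    unfolding I(1) by (rule sum_Pow_insert[OF I(3) I(2)])
  have z1: "(\<Sum>M\<in>Pow I'. F1 (insert j M)) = 0" by (rule sum.neutral) (simp add: F1_def)
  have z2: "(\<Sum>M\<in>Pow I'. F2 M) = 0"
    by (rule sum.neutral) (use I in \<open>auto simp: F2_def\<close>)
  have c: "F1 M + F2 (insert j M) = 0" if M: "M \<in> Pow I'" for M
  proof -
    have jM: "j \<notin> M" "finite M" using M I finite_subset by auto
    have e1: "I - M = insert j (I' - M)" "I - M - {j} = I' - M" "I - insert j M = I' - M" "insert j M - {j} = M"
      using M I by auto
    have c1: "card (I - M) = Suc (card (I' - M))" using e1(1) I by simp
    have ex: "I' - M - {j} = I' - M" "card (insert j (I' - M)) = Suc (card (I' - M))" using I by auto
    have P1: "PMg (fr p) x I M = PMg (fr p) x I' M * (\<Prod>i\<in>M. fr p (x i) (x j))"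
      unfolding I(1) using PM_ins1[OF I(3) I(2)] M by simp
    have P2: "PMg (fr p) x I (insert j M) = PMg (fr p) x I' M * (\<Prod>k\<in>I' - M. fr p (x j) (x k))"
      unfolding I(1) using PM_ins2[OF I(3) I(2)] M by simp
    show ?thesis unfolding F1_def F2_def using jM
      by (simp add: e1 c1 ex P1 P2 algebra_simps)
  qed
  have "(\<Sum>M\<in>Pow I. F1 M) + (\<Sum>M\<in>Pow I. F2 M) = (\<Sum>M\<in>Pow I'. F1 M + F2 (insert j M))"
    unfolding S1 S2 z1 z2 sum.distrib by simp
  also have "\<dots> = 0" using c by (simp add: sum.neutral)
  finally show ?thesis unfolding F1_def F2_def .
qed

lemma resid_minus:
  assumes fin: "finite I" and j: "j \<in> I"
  shows "(\<Sum>M\<in>Pow I. wt a (Suc (card M)) (card (I - M)) * PMg (fr p) x I M * (if j \<in> I - M then r * (\<Prod>k\<in>I - M - {j}. fr p (- x j) (x k)) else 0))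
    + (\<Sum>M\<in>Pow I. wt a (card M) (Suc (card (I - M))) * PMg (fr p) x I M * (if j \<in> M then - r * (\<Prod>i\<in>M - {j}. fr p (x i) (- x j)) else 0))
    = r * ((\<Prod>k\<in>I - {j}. fr p (x k) (x j)) - (\<Prod>k\<in>I - {j}. fr p (x j) (x k))) * JSg (fr p) a x (I - {j})"
proof -
  define I' where "I' = I - {j}"
  have I: "I = insert j I'" "j \<notin> I'" "finite I'" using j fin by (auto simp: I'_def)
  define F1 where "F1 M = wt a (Suc (card M)) (card (I - M)) * PMg (fr p) x I M * (if j \<in> I - M then r * (\<Prod>k\<in>I - M - {j}. fr p (- x j) (x k)) else 0)" for M
  define F2 where "F2 M = wt a (card M) (Suc (card (I - M))) * PMg (fr p) x I M * (if j \<in> M then - r * (\<Prod>i\<in>M - {j}. fr p (x i) (- x j)) else 0)" for M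
  define A where "A = (\<Prod>k\<in>I'. fr p (x k) (x j))"
  define B where "B = (\<Prod>k\<in>I'. fr p (x j) (x k))"
  have S1: "(\<Sum>M\<in>Pow I. F1 M) = (\<Sum>M\<in>Pow I'. F1 M) + (\<Sum>M\<in>Pow I'. F1 (insert j M))"
    unfolding I(1) by (rule sum_Pow_insert[OF I(3) I(2)])
  have S2: "(\<Sum>M\<in>Pow I. F2 M) = (\<Sum>M\<in>Pow I'. F2 M) + (\<Sum>M\<in>Pow I'. F2 (insert j M))"
    unfolding I(1) by (rule sum_Pow_insert[OF I(3) I(2)])
  have z1: "(\<Sum>M\<in>Pow I'. F1 (insert j M)) = 0" by (rule sum.neutral) (simp add: F1_def)
  have z2: "(\<Sum>M\<in>Pow I'. F2 M) = 0"
    by (rule sum.neutral) (use I in \<open>auto simp: F2_def\<close>)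
  have c1: "F1 M = r * A * (wt a (card M) (card (I' - M)) * PMg (fr p) x I' M)" if M: "M \<in> Pow I'" for M
  proof -
    have jM: "j \<notin> M" "finite M" using M I finite_subset by auto
    have e1: "I - M = insert j (I' - M)" "I - M - {j} = I' - M"
      using M I by auto
    have cc: "card (I - M) = Suc (card (I' - M))" using e1(1) I by simp
    have ex: "I' - M - {j} = I' - M" "card (insert j (I' - M)) = Suc (card (I' - M))" using I by auto
    have P1: "PMg (fr p) x I M = PMg (fr p) x I' M * (\<Prod>i\<in>M. fr p (x i) (x j))"
      unfolding I(1) using PM_ins1[OF I(3) I(2)] M by simp
    have AA: "A = (\<Prod>k\<in>I' - M. fr p (x k) (x j)) * (\<Prod>i\<in>M. fr p (x i) (x j))"
      unfolding A_def using M I by (intro prod.subset_diff) auto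
    show ?thesis unfolding F1_def using jM
      by (simp add: e1 cc ex P1 AA fr_neg1 wt_SucSuc algebra_simps)
  qed
  have c2: "F2 (insert j M) = - r * B * (wt a (card M) (card (I' - M)) * PMg (fr p) x I' M)" if M: "M \<in> Pow I'" for M
  proof -
    have jM: "j \<notin> M" "finite M" using M I finite_subset by auto
    have e1: "I - insert j M = I' - M" "insert j M - {j} = M"
      using M I by auto
    have P2: "PMg (fr p) x I (insert j M) = PMg (fr p) x I' M * (\<Prod>k\<in>I' - M. fr p (x j) (x k))"
      unfolding I(1) using PM_ins2[OF I(3) I(2)] M by simp
    have BB: "B = (\<Prod>k\<in>I' - M. fr p (x j) (x k)) * (\<Prod>i\<in>M. fr p (x j) (x i))"
      unfolding B_def using M I by (intro prod.subset_diff) auto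
    show ?thesis unfolding F2_def using jM
      by (simp add: e1 P2 BB fr_neg2 wt_SucSuc algebra_simps)
  qed
  have "(\<Sum>M\<in>Pow I. F1 M) + (\<Sum>M\<in>Pow I. F2 M) = (\<Sum>M\<in>Pow I'. F1 M) + (\<Sum>M\<in>Pow I'. F2 (insert j M))"
    unfolding S1 S2 z1 z2 by simp
  also have "\<dots> = (\<Sum>M\<in>Pow I'. r * A * (wt a (card M) (card (I' - M)) * PMg (fr p) x I' M))
       + (\<Sum>M\<in>Pow I'. - r * B * (wt a (card M) (card (I' - M)) * PMg (fr p) x I' M))"
    using c1 c2 by simp
  also have "\<dots> = r * (A - B) * JSg (fr p) a x I'"
    unfolding JSg_def sum_distrib_left[symmetric] by (simp add: algebra_simps)
  finally show ?thesis unfolding F1_def F2_def A_def B_def I'_def .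
qed




lemma core:
  fixes x :: "nat \<Rightarrow> complex"
  assumes fin: "finite I"
    and nz: "\<And>i. i \<in> I \<Longrightarrow> x i \<noteq> 0"
    and dist: "\<And>i j. i \<in> I \<Longrightarrow> j \<in> I \<Longrightarrow> i \<noteq> j \<Longrightarrow> x i \<noteq> x j \<and> x i \<noteq> - x j"
    and z: "\<And>i. i \<in> I \<Longrightarrow> z \<noteq> x i \<and> z \<noteq> - x i"
  shows "LL (fr p) a x I z = EE a * JSg (fr p) a x I + (\<Sum>i\<in>I. DD p a x I i / (z + x i))"
proof -
  define T where "T = x ` I \<union> (\<lambda>i. - x i) ` I"
  define G where "G z = LL (fr p) a x I z - (EE a * JSg (fr p) a x I + (\<Sum>i\<in>I. DD p a x I i / (z + x i)))" for z
  have finT: "finite T" using fin by (simp add: T_def)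
  have Tmem: "w \<noteq> x i \<and> w \<noteq> - x i" if "w \<notin> T" "i \<in> I" for w i
    using that unfolding T_def by auto
  have G_eq: "(z - t) * G z = (\<Sum>M\<in>Pow I. wt a (Suc (card M)) (card (I - M)) * PMg (fr p) x I M * ((z - t) * (\<Prod>k\<in>I - M. fr p z (x k))))
      + (\<Sum>M\<in>Pow I. wt a (card M) (Suc (card (I - M))) * PMg (fr p) x I M * ((z - t) * (\<Prod>i\<in>M. fr p (x i) z)))
      - ((z - t) * (EE a * JSg (fr p) a x I) + (\<Sum>i\<in>I. DD p a x I i * ((z - t) / (z + x i))))" for z t
    unfolding G_def LL_def distrib_left right_diff_distrib sum_distrib_left
    by (simp add: mult_ac times_divide_eq_right)
  have hol: "G holomorphic_on (- T)"
    unfolding G_def LL_def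
    by (intro holomorphic_intros) (auto dest: Tmem simp: eq_neg_iff_add_eq_0[symmetric])
  have Ginf: "(G \<longlongrightarrow> 0) at_infinity"
  proof -
    have l1: "((\<lambda>z. \<Sum>M\<in>Pow I. wt a (Suc (card M)) (card (I - M)) * PMg (fr p) x I M * (\<Prod>k\<in>I - M. fr p z (x k)))
       \<longlongrightarrow> (\<Sum>M\<in>Pow I. wt a (Suc (card M)) (card (I - M)) * PMg (fr p) x I M * (\<Prod>k\<in>I - M. 1))) at_infinity"
      by (intro tendsto_sum tendsto_mult tendsto_const tendsto_prod inf_fr1)
    have l2: "((\<lambda>z. \<Sum>M\<in>Pow I. wt a (card M) (Suc (card (I - M))) * PMg (fr p) x I M * (\<Prod>i\<in>M. fr p (x i) z))
       \<longlongrightarrow> (\<Sum>M\<in>Pow I. wt a (card M) (Suc (card (I - M))) * PMg (fr p) x I M * (\<Prod>i\<in>M. 1))) at_infinity"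
      by (intro tendsto_sum tendsto_mult tendsto_const tendsto_prod inf_fr2)
    have l3: "((\<lambda>z. \<Sum>i\<in>I. DD p a x I i / (z + x i)) \<longlongrightarrow> (\<Sum>i\<in>I. 0)) at_infinity"
      by (intro tendsto_sum tendsto_divide_0[OF tendsto_const]
          tendsto_add_filterlim_at_infinity'[OF filterlim_ident tendsto_const])
    have vals: "(\<Sum>M\<in>Pow I. wt a (Suc (card M)) (card (I - M)) * PMg (fr p) x I M * (\<Prod>k\<in>I - M. 1))
       + (\<Sum>M\<in>Pow I. wt a (card M) (Suc (card (I - M))) * PMg (fr p) x I M * (\<Prod>i\<in>M. 1)) = EE a * JSg (fr p) a x I"
      unfolding EE_def JSg_def wt_Suc1 wt_Suc2 by (simp add: sum_distrib_left distrib_right mult.assoc sum.distrib)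
    have "((\<lambda>z. LL (fr p) a x I z - (EE a * JSg (fr p) a x I + (\<Sum>i\<in>I. DD p a x I i / (z + x i))))
       \<longlongrightarrow> ((\<Sum>M\<in>Pow I. wt a (Suc (card M)) (card (I - M)) * PMg (fr p) x I M * (\<Prod>k\<in>I - M. 1))
       + (\<Sum>M\<in>Pow I. wt a (card M) (Suc (card (I - M))) * PMg (fr p) x I M * (\<Prod>i\<in>M. 1)))
        - (EE a * JSg (fr p) a x I + (\<Sum>i\<in>I. 0))) at_infinity"
      unfolding LL_def by (intro tendsto_diff tendsto_add l1 l2 tendsto_const l3)
    then show ?thesis unfolding vals G_def by simp
  qed
  have res: "((\<lambda>z. (z - t) * G z) \<longlongrightarrow> 0) (at t)" if tT: "t \<in> T" for t
  proof -
    from tT obtain j where j: "j \<in> I" and tj: "t = x j \<or> t = - x j" unfolding T_def by auto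
    have xj: "x j \<noteq> 0" using nz j by auto
    have tk: "t \<noteq> x k \<and> t \<noteq> - x k" if "k \<in> I" "k \<noteq> j" for k
      using dist[OF j that(1)] dist[OF that(1) j] that tj by (metis minus_minus)
    have L1: "((\<lambda>z. \<Sum>M\<in>Pow I. wt a (Suc (card M)) (card (I - M)) * PMg (fr p) x I M * ((z - t) * (\<Prod>k\<in>I - M. fr p z (x k))))
       \<longlongrightarrow> (\<Sum>M\<in>Pow I. wt a (Suc (card M)) (card (I - M)) * PMg (fr p) x I M * (if j \<in> I - M then \<alpha> * (\<Prod>k\<in>I - M - {j}. fr p t (x k)) else 0))) (at t)"
      if A: "((\<lambda>z. (z - t) * fr p z (x j)) \<longlongrightarrow> \<alpha>) (at t)" for \<alpha>
    proof (intro tendsto_sum tendsto_mult tendsto_const)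
      fix M assume M: "M \<in> Pow I"
      show "((\<lambda>z. (z - t) * (\<Prod>k\<in>I - M. fr p z (x k))) \<longlongrightarrow> (if j \<in> I - M then \<alpha> * (\<Prod>k\<in>I - M - {j}. fr p t (x k)) else 0)) (at t)"
      proof (rule lim_prod_gen[where f="\<lambda>k z. fr p z (x k)"])
        show "finite (I - M)" using fin by simp
      next
        fix k assume "k \<in> I - M - {j}"
        then show "((\<lambda>z. fr p z (x k)) \<longlongrightarrow> fr p t (x k)) (at t)" using tk by (intro cont_fr1) auto
      next
        show "((\<lambda>z. (z - t) * fr p z (x j)) \<longlongrightarrow> \<alpha>) (at t)" by (rule A)
      qed
    qed
    have L2: "((\<lambda>z. \<Sum>M\<in>Pow I. wt a (card M) (Suc (card (I - M))) * PMg (fr p) x I M * ((z - t) * (\<Prod>i\<in>M. fr p (x i) z)))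
       \<longlongrightarrow> (\<Sum>M\<in>Pow I. wt a (card M) (Suc (card (I - M))) * PMg (fr p) x I M * (if j \<in> M then \<alpha> * (\<Prod>i\<in>M - {j}. fr p (x i) t) else 0))) (at t)"
      if A: "((\<lambda>z. (z - t) * fr p (x j) z) \<longlongrightarrow> \<alpha>) (at t)" for \<alpha>
    proof (intro tendsto_sum tendsto_mult tendsto_const)
      fix M assume M: "M \<in> Pow I"
      have fM: "finite M" using M fin finite_subset by auto
      show "((\<lambda>z. (z - t) * (\<Prod>i\<in>M. fr p (x i) z)) \<longlongrightarrow> (if j \<in> M then \<alpha> * (\<Prod>i\<in>M - {j}. fr p (x i) t) else 0)) (at t)"
      proof (rule lim_prod_gen[where f="\<lambda>k z. fr p (x k) z"])
        show "finite M" by (rule fM)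
      next
        fix k assume "k \<in> M - {j}"
        then show "((\<lambda>z. fr p (x k) z) \<longlongrightarrow> fr p (x k) t) (at t)" using tk M by (intro cont_fr2) auto
      next
        show "((\<lambda>z. (z - t) * fr p (x j) z) \<longlongrightarrow> \<alpha>) (at t)" by (rule A)
      qed
    qed
    have L3: "((\<lambda>z. (z - t) * (EE a * JSg (fr p) a x I)) \<longlongrightarrow> 0) (at t)"
    proof -
      have "((\<lambda>z. (z - t) * (EE a * JSg (fr p) a x I)) \<longlongrightarrow> (t - t) * (EE a * JSg (fr p) a x I)) (at t)"
        by (intro tendsto_intros)
      then show ?thesis by simp
    qed
    have Gfun: "(\<lambda>z. (z - t) * G z) = (\<lambda>z. (\<Sum>M\<in>Pow I. wt a (Suc (card M)) (card (I - M)) * PMg (fr p) x I M * ((z - t) * (\<Prod>k\<in>I - M. fr p z (x k))))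
      + (\<Sum>M\<in>Pow I. wt a (card M) (Suc (card (I - M))) * PMg (fr p) x I M * ((z - t) * (\<Prod>i\<in>M. fr p (x i) z)))
      - ((z - t) * (EE a * JSg (fr p) a x I) + (\<Sum>i\<in>I. DD p a x I i * ((z - t) / (z + x i)))))"
      by (rule ext) (rule G_eq)
    from tj show ?thesis
    proof
      assume tj: "t = x j"
      have L4: "((\<lambda>z. \<Sum>i\<in>I. DD p a x I i * ((z - t) / (z + x i))) \<longlongrightarrow> 0) (at t)"
      proof -
        have "((\<lambda>z. \<Sum>i\<in>I. DD p a x I i * ((z - t) / (z + x i))) \<longlongrightarrow> (\<Sum>i\<in>I. DD p a x I i * ((t - t) / (t + x i)))) (at t)"
        proof (intro tendsto_sum tendsto_mult tendsto_const tendsto_divide tendsto_diff tendsto_add tendsto_ident_at)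
          fix i assume i: "i \<in> I"
          show "t + x i \<noteq> 0"
          proof (cases "i = j")
            case True then show ?thesis using tj xj by simp
          next
            case False then show ?thesis using tj dist[OF j i] by (auto simp: eq_neg_iff_add_eq_0[symmetric])
          qed
        qed
        then show ?thesis by simp
      qed
      have "((\<lambda>z. (z - t) * G z) \<longlongrightarrow>
          (\<Sum>M\<in>Pow I. wt a (Suc (card M)) (card (I - M)) * PMg (fr p) x I M * (if j \<in> I - M then rho p * x j * (\<Prod>k\<in>I - M - {j}. fr p t (x k)) else 0))
        + (\<Sum>M\<in>Pow I. wt a (card M) (Suc (card (I - M))) * PMg (fr p) x I M * (if j \<in> M then - (rho p * x j) * (\<Prod>i\<in>M - {j}. fr p (x i) t) else 0))
        - (0 + 0)) (at t)"
        unfolding Gfun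
        by (intro tendsto_diff tendsto_add L1 L2 L3 L4) (use pole1[OF xj, of p] pole2[OF xj, of p] tj in auto)
      then show ?thesis using resid_plus[OF fin j, of a p x "rho p * x j"] unfolding tj by simp
    next
      assume tj: "t = - x j"
      have L4: "((\<lambda>z. \<Sum>i\<in>I. DD p a x I i * ((z - t) / (z + x i))) \<longlongrightarrow> DD p a x I j) (at t)"
      proof -
        have "((\<lambda>z. \<Sum>i\<in>I. DD p a x I i * ((z - t) / (z + x i))) \<longlongrightarrow> (\<Sum>i\<in>I. DD p a x I i * (if i = j then 1 else 0))) (at t)"
        proof (intro tendsto_sum tendsto_mult tendsto_const)
          fix i assume i: "i \<in> I"
          show "((\<lambda>z. (z - t) / (z + x i)) \<longlongrightarrow> (if i = j then 1 else 0)) (at t)"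
          proof (cases "i = j")
            case True
            have "eventually (\<lambda>z. z \<noteq> t) (at t)" by (simp add: eventually_at_filter)
            then have "eventually (\<lambda>z. 1 = (z - t) / (z + x i)) (at t)"
              by (rule eventually_mono) (simp add: True tj eq_neg_iff_add_eq_0)
            then show ?thesis using True by (simp add: Lim_transform_eventually[OF tendsto_const])
          next
            case False
            have ne: "t + x i \<noteq> 0" using tj dist[OF i j False] by (auto simp: eq_neg_iff_add_eq_0[symmetric])
            have "((\<lambda>z. (z - t) / (z + x i)) \<longlongrightarrow> (t - t) / (t + x i)) (at t)"
              using ne by (intro tendsto_intros) auto
            then show ?thesis using False by simp
          qed
        qed
        moreover have "(\<Sum>i\<in>I. DD p a x I i * (if i = j then 1 else 0)) = DD p a x I j"
          using fin j by (simp add: if_distrib cong: if_cong)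
        ultimately show ?thesis by simp
      qed
      have lim: "((\<lambda>z. (z - t) * G z) \<longlongrightarrow>
          (\<Sum>M\<in>Pow I. wt a (Suc (card M)) (card (I - M)) * PMg (fr p) x I M * (if j \<in> I - M then rho p * x j * (\<Prod>k\<in>I - M - {j}. fr p t (x k)) else 0))
        + (\<Sum>M\<in>Pow I. wt a (card M) (Suc (card (I - M))) * PMg (fr p) x I M * (if j \<in> M then - (rho p * x j) * (\<Prod>i\<in>M - {j}. fr p (x i) t) else 0))
        - (0 + DD p a x I j)) (at t)"
        unfolding Gfun
        by (intro tendsto_diff tendsto_add L1 L2 L3 L4) (use pole3[OF xj, of p] pole4[OF xj, of p] tj in auto)
      have DDe: "DD p a x I j = rho p * x j * ((\<Prod>k\<in>I - {j}. fr p (x k) (x j)) - (\<Prod>k\<in>I - {j}. fr p (x j) (x k))) * JSg (fr p) a x (I - {j})"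
        unfolding DD_def rho_sg by (simp add: algebra_simps)
      show ?thesis using lim resid_minus[OF fin j, of a p x "rho p * x j"] DDe unfolding tj by simp
    qed
  qed
  have "G z = 0"
    by (rule remove_sings_zero[OF finT hol res Ginf]) (use z in \<open>auto simp: T_def\<close>)
  then show ?thesis by (simp add: G_def)
qed




lemma two_cos: "2 * cos (of_real pi * a) = EE a"
  by (simp add: cos_exp_eq EE_def mult.assoc)

lemma Jsum_nil: "Jsum p a [] = 1"
  by (simp add: Jsum_def)

lemma Jsum_single: "Jsum p a [x] = 2 * cos (of_real pi * a)"
proof -
  have P: "Pow {0..<length [x]} = {{}, {0}}" by auto
  have "Jsum p a [x] = exp (\<i> * of_real pi * a * (0 - 1)) + exp (\<i> * of_real pi * a * (1 - 0))"
    unfolding Jsum_def P by simp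
  also have "\<dots> = EE a" by (simp add: EE_def)
  finally show ?thesis by (simp add: two_cos)
qed

lemma generic_sub:
  assumes g: "generic xs"
    and h: "\<And>k. k < length ys \<Longrightarrow> h k < length xs \<and> ys ! k = xs ! h k"
    and inj: "inj_on h {..<length ys}"
  shows "generic ys"
  unfolding generic_def
proof (intro allI impI conjI)
  fix i assume i: "i < length ys"
  have hi: "h i < length xs" "ys ! i = xs ! h i" using h[OF i] by auto
  show "ys ! i \<noteq> 0" using g hi unfolding generic_def by auto
  have *: "ys ! i \<noteq> ys ! j \<and> ys ! i \<noteq> - ys ! j" if j: "j < length ys" "i \<noteq> j" for j
  proof -
    have hj: "h j < length xs" "ys ! j = xs ! h j" using h[OF j(1)] by auto
    have "h i \<noteq> h j" using inj i j unfolding inj_on_def by auto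
    then show ?thesis using g hi hj unfolding generic_def by auto
  qed
  fix j assume "j < length ys" "i \<noteq> j"
  then show "ys ! i \<noteq> ys ! j" "ys ! i \<noteq> - ys ! j" using * by auto
qed

lemma length_remove_at: "i < length xs \<Longrightarrow> length (remove_at i xs) = length xs - 1"
  by (simp add: remove_at_def)

lemma nth_remove_at:
  "i < length xs \<Longrightarrow> k < length xs - 1 \<Longrightarrow> remove_at i xs ! k = xs ! (if k < i then k else Suc k)"
  by (auto simp: remove_at_def nth_append min_def)

lemma generic_remove:
  assumes "generic xs" "i < length xs"
  shows "generic (remove_at i xs)"
proof (rule generic_sub[OF assms(1), where h="\<lambda>k. if k < i then k else Suc k"])
  fix k assume "k < length (remove_at i xs)"
  then show "(if k < i then k else Suc k) < length xs \<and> remove_at i xs ! k = xs ! (if k < i then k else Suc k)"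
    using assms(2) by (auto simp: length_remove_at nth_remove_at)
next
  show "inj_on (\<lambda>k. if k < i then k else Suc k) {..<length (remove_at i xs)}"
    by (auto simp: inj_on_def split: if_splits)
qed

lemma generic_butlast:
  assumes "generic (xs @ [z])"
  shows "generic xs"
  by (rule generic_sub[OF assms, where h="\<lambda>k. k"]) (auto simp: nth_append)

lemma Jsum_fr:
  assumes "\<And>k. k < length xs \<Longrightarrow> xs ! k \<noteq> 0"
  shows "Jsum p a xs = JSg (fr p) a (nth xs) {0..<length xs}"
  unfolding Jsum_JSg by (rule JSg_cong_phi) (use assms in \<open>simp add: ff_fr\<close>)

lemma generic_nz: "generic xs \<Longrightarrow> k < length xs \<Longrightarrow> xs ! k \<noteq> 0"
  unfolding generic_def by auto

lemma Jsum_remove: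
  assumes g: "generic xs" and i: "i < length xs"
  shows "Jsum p a (remove_at i xs) = JSg (fr p) a (nth xs) ({0..<length xs} - {i})"
proof -
  define n where "n = length xs"
  define h where "h k = (if k < i then k else Suc k)" for k
  have gr: "generic (remove_at i xs)" by (rule generic_remove[OF g i])
  have "Jsum p a (remove_at i xs) = JSg (fr p) a (nth (remove_at i xs)) {0..<n - 1}"
    using Jsum_fr[of "remove_at i xs" p a] generic_nz[OF gr] i by (simp add: length_remove_at n_def)
  also have "\<dots> = JSg (fr p) a (nth xs \<circ> h) {0..<n - 1}"
    by (rule JSg_cong) (use i in \<open>simp add: nth_remove_at h_def n_def\<close>)
  also have "\<dots> = JSg (fr p) a (nth xs) (h ` {0..<n - 1})"
    by (rule JSg_reindex) (auto simp: inj_on_def h_def split: if_splits)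
  also have "h ` {0..<n - 1} = {0..<n} - {i}"
  proof
    show "h ` {0..<n - 1} \<subseteq> {0..<n} - {i}" using i by (auto simp: h_def n_def)
    show "{0..<n} - {i} \<subseteq> h ` {0..<n - 1}"
    proof
      fix k assume k: "k \<in> {0..<n} - {i}"
      show "k \<in> h ` {0..<n - 1}"
      proof (cases "k < i")
        case True
        then have "k = h k" "k \<in> {0..<n - 1}" using k i by (auto simp: h_def n_def)
        then show ?thesis by blast
      next
        case False
        then have "k = h (k - 1)" "k - 1 \<in> {0..<n - 1}" using k by (auto simp: h_def)
        then show ?thesis by blast
      qed
    qed
  qed
  finally show ?thesis by (simp add: n_def)
qed

lemma Jsum_rec:
  assumes len: "length xs \<ge> 1" and g: "generic (xs @ [x])"
  shows "Jsum p a (xs @ [x]) = 2 * cos (of_real pi * a) * Jsum p a xs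
          + (\<Sum>i<length xs. xs ! i * RR p (Jsum p a) xs i / (x + xs ! i))"
proof -
  define n where "n = length xs"
  define I where "I = {0..<n}"
  have gx: "generic xs" by (rule generic_butlast[OF g])
  have nzX: "\<And>i. i \<in> I \<Longrightarrow> xs ! i \<noteq> 0" using generic_nz[OF gx] by (simp add: I_def n_def)
  have distX: "\<And>i j. i \<in> I \<Longrightarrow> j \<in> I \<Longrightarrow> i \<noteq> j \<Longrightarrow> xs ! i \<noteq> xs ! j \<and> xs ! i \<noteq> - xs ! j"
    using gx unfolding generic_def I_def n_def by auto
  have zX: "x \<noteq> xs ! i \<and> x \<noteq> - xs ! i" if "i \<in> I" for i
  proof -
    have "i < length (xs @ [x])" "n < length (xs @ [x])" "i \<noteq> n" using that by (auto simp: I_def n_def)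
    then have "(xs @ [x]) ! n \<noteq> (xs @ [x]) ! i \<and> (xs @ [x]) ! n \<noteq> - (xs @ [x]) ! i"
      using g unfolding generic_def by metis
    then show ?thesis using that by (simp add: nth_append I_def n_def)
  qed
  have "Jsum p a (xs @ [x]) = JSg (fr p) a (nth (xs @ [x])) {0..<Suc n}"
    using Jsum_fr[of "xs @ [x]" p a] generic_nz[OF g] by (simp add: n_def)
  also have "{0..<Suc n} = insert n I" by (auto simp: I_def)
  also have "JSg (fr p) a (nth (xs @ [x])) (insert n I) = JSg (fr p) a ((nth xs)(n := x)) (insert n I)"
    by (rule JSg_cong) (auto simp: I_def n_def nth_append)
  also have "\<dots> = LL (fr p) a ((nth xs)(n := x)) I x"
    using JS_insert[of I n "fr p" a "(nth xs)(n := x)"] by (simp add: I_def)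
  also have "\<dots> = LL (fr p) a (nth xs) I x"
    by (rule LL_cong) (simp add: I_def)
  also have "\<dots> = EE a * JSg (fr p) a (nth xs) I + (\<Sum>i\<in>I. DD p a (nth xs) I i / (x + xs ! i))"
    by (rule core) (use nzX distX zX in \<open>auto simp: I_def\<close>)
  also have "\<dots> = 2 * cos (of_real pi * a) * Jsum p a xs
          + (\<Sum>i<length xs. xs ! i * RR p (Jsum p a) xs i / (x + xs ! i))"
  proof -
    have "JSg (fr p) a (nth xs) I = Jsum p a xs"
      using Jsum_fr[of xs p a] generic_nz[OF gx] by (simp add: I_def n_def)
    moreover have "DD p a (nth xs) I i = xs ! i * RR p (Jsum p a) xs i" if i: "i \<in> I" for i
    proof -
      have in_: "i < length xs" using i by (simp add: I_def n_def)
      have p1: "(\<Prod>j\<in>{0..<length xs} - {i}. ff p (xs ! i / xs ! j)) = (\<Prod>j\<in>I - {i}. fr p (xs ! i) (xs ! j))"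
        by (rule prod.cong) (auto simp: I_def n_def ff_fr generic_nz[OF gx])
      have p2: "(\<Prod>j\<in>{0..<length xs} - {i}. ff p (xs ! j / xs ! i)) = (\<Prod>j\<in>I - {i}. fr p (xs ! j) (xs ! i))"
        using generic_nz[OF gx in_] by (intro prod.cong) (auto simp: I_def n_def ff_fr)
      show ?thesis unfolding DD_def RR_def p1 p2 Jsum_remove[OF gx in_] sg_def
        by (simp add: I_def n_def)
    qed
    ultimately show ?thesis
      by (simp add: two_cos I_def n_def lessThan_atLeast0)
  qed
  finally show ?thesis .
qed

lemma Jsum_satisfies: "satisfies_rec p a (Jsum p a)"
  unfolding satisfies_rec_def using Jsum_nil Jsum_single Jsum_rec by blast

lemma uniq:
  assumes J: "satisfies_rec p a J"
  shows "generic xs \<Longrightarrow> J xs = Jsum p a xs"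
proof (induction "length xs" arbitrary: xs rule: less_induct)
  case less
  show ?case
  proof (cases xs rule: rev_exhaust)
    case Nil
    then show ?thesis using J Jsum_nil unfolding satisfies_rec_def by simp
  next
    case (snoc ys z)
    show ?thesis
    proof (cases "ys = []")
      case True
      then show ?thesis using J Jsum_single snoc unfolding satisfies_rec_def by simp
    next
      case False
      then have len: "length ys \<ge> 1" by (cases ys) auto
      have g: "generic (ys @ [z])" using less.prems snoc by simp
      have gy: "generic ys" by (rule generic_butlast[OF g])
      have IHy: "J ys = Jsum p a ys" using less.hyps[of ys] gy snoc by simp
      have RReq: "RR p J ys i = RR p (Jsum p a) ys i" if i: "i < length ys" for i
      proof -
        have "J (remove_at i ys) = Jsum p a (remove_at i ys)"
          using less.hyps[of "remove_at i ys"] generic_remove[OF gy i] i snoc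
          by (simp add: length_remove_at)
        then show ?thesis by (simp add: RR_def)
      qed
      have "J (ys @ [z]) = 2 * cos (of_real pi * a) * J ys + (\<Sum>i<length ys. ys ! i * RR p J ys i / (z + ys ! i))"
        using J len g unfolding satisfies_rec_def by blast
      also have "\<dots> = 2 * cos (of_real pi * a) * Jsum p a ys + (\<Sum>i<length ys. ys ! i * RR p (Jsum p a) ys i / (z + ys ! i))"
        using IHy RReq by simp
      also have "\<dots> = Jsum p a (ys @ [z])" using Jsum_rec[OF len g] by simp
      finally show ?thesis using snoc by simp
    qed
  qed
qed

lemma Jsum_perm:
  assumes "mset ys = mset xs"
  shows "Jsum p a ys = Jsum p a xs"
proof -
  obtain q where q: "q permutes {..<length xs}" "permute_list q xs = ys"
    using mset_eq_permutation[OF assms] by blast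
  have len: "length ys = length xs" using q(2) by auto
  have "Jsum p a ys = JSg (\<lambda>u v. ff p (u / v)) a (nth ys) {..<length xs}"
    unfolding Jsum_JSg len lessThan_atLeast0 ..
  also have "\<dots> = JSg (\<lambda>u v. ff p (u / v)) a (nth xs \<circ> q) {..<length xs}"
    by (rule JSg_cong) (use q in \<open>auto simp: permute_list_nth\<close>)
  also have "\<dots> = JSg (\<lambda>u v. ff p (u / v)) a (nth xs) (q ` {..<length xs})"
    by (rule JSg_reindex) (rule permutes_inj_on[OF q(1)])
  also have "q ` {..<length xs} = {..<length xs}" by (rule permutes_image[OF q(1)])
  also have "JSg (\<lambda>u v. ff p (u / v)) a (nth xs) {..<length xs} = Jsum p a xs"
    unfolding Jsum_JSg lessThan_atLeast0 ..
  finally show ?thesis .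
qed

lemma Jsum_hom:
  assumes c: "(c::complex) \<noteq> 0"
  shows "Jsum p a (map (\<lambda>x. c * x) xs) = Jsum p a xs"
  unfolding Jsum_def length_map
  by (intro sum.cong refl arg_cong2[where f="(*)"] prod.cong) (auto simp: c)

theorem theorem4:
  fixes p :: real and a :: complex
  assumes "p \<in> {-1<..<0} \<union> {0<..<1}"
  shows "satisfies_rec p a (Jsum p a)
    \<and> (\<forall>J. satisfies_rec p a J \<longrightarrow> (\<forall>xs. generic xs \<longrightarrow> J xs = Jsum p a xs))
    \<and> (\<forall>xs ys. generic xs \<longrightarrow> mset ys = mset xs \<longrightarrow> Jsum p a ys = Jsum p a xs)
    \<and> (\<forall>xs (c::complex). generic xs \<longrightarrow> c \<noteq> 0 \<longrightarrow>
          Jsum p a (map (\<lambda>x. c * x) xs) = Jsum p a xs)"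
  using Jsum_satisfies uniq Jsum_perm Jsum_hom by blast


end
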